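(* Let $n\geq 4$, $1\leq d\leq n-1$, and $G\in\Omega_{n,d}$. Suppose $\{v_0,v_1,v_2\}\subseteq[n]$ is a set of three vertices such that the induced subdigraph $G[\{v_0,v_1,v_2\}]$ is a directed 3-cycle. Then there exists a useful neighbour or a useful arc for this 3-cycle.
   Context: $\Omega_{n,d}$ is the set of simple digraphs on $[n]$ in which every vertex has in-degree and out-degree $d$. For $U=\{v_0,v_1,v_2\}$ define the subsets of $V(G)\setminus U$: $\mathcal{W}^{(0,0)}=\{x: (x,u)\notin A(G),(u,x)\notin A(G)\ \forall u\in U\}$, $\mathcal{W}^{(0,1)}=\{x:(x,u)\notin A(G),(u,x)\in A(G)\ \forall u\in U\}$, $\mathcal{W}^{(1,0)}=\{x:(x,u)\in A(G),(u,x)\notin A(G)\ \forall u\in U\}$, $\mathcal{W}^{(1,1)}=\{x:(x,u)\in A(G),(u,x)\in A(G)\ \forall u\in U\}$. A vertex $x\in V(G)\setminus U$ is a useful neighbour for the 3-cycle if $x$ lies in none of the four sets $\mathcal{W}^{(i,j)}$. An ordered pair $(x,y)$ with $x\neq y$ is a useful arc for the 3-cycle if either (U1) $(x,y)\in A(G)$, $x\in\mathcal{W}^{(0,0)}\cup\mathcal{W}^{(0,1)}$ and $y\in\mathcal{W}^{(0,0)}\cup\mathcal{W}^{(1,0)}$; or (U2) $(x,y)\notin A(G)$, $x\in\mathcal{W}^{(1,0)}\cup\mathcal{W}^{(1,1)}$ and $y\in\mathcal{W}^{(0,1)}\cup\mathcal{W}^{(1,1)}$. *)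

theory Defs
  imports Main
begin

text \<open>A digraph on [n] = {1..n} is given by its arc set A :: (nat \<times> nat) set.
  Simple: no loops (multiple arcs impossible in a set). Opposite arcs allowed.\<close>

definition Omega :: "nat \<Rightarrow> nat \<Rightarrow> (nat \<times> nat) set set" where
  "Omega n d = {A. A \<subseteq> {1..n} \<times> {1..n} \<and> (\<forall>v. (v, v) \<notin> A) \<and>
     (\<forall>v\<in>{1..n}. card {u. (v, u) \<in> A} = d \<and> card {u. (u, v) \<in> A} = d)}"

definition W00 :: "nat \<Rightarrow> (nat \<times> nat) set \<Rightarrow> nat set \<Rightarrow> nat set" where
  "W00 n A U = {x \<in> {1..n} - U. \<forall>u\<in>U. (x, u) \<notin> A \<and> (u, x) \<notin> A}"

definition W01 :: "nat \<Rightarrow> (nat \<times> nat) set \<Rightarrow> nat set \<Rightarrow> nat set" where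
  "W01 n A U = {x \<in> {1..n} - U. \<forall>u\<in>U. (x, u) \<notin> A \<and> (u, x) \<in> A}"

definition W10 :: "nat \<Rightarrow> (nat \<times> nat) set \<Rightarrow> nat set \<Rightarrow> nat set" where
  "W10 n A U = {x \<in> {1..n} - U. \<forall>u\<in>U. (x, u) \<in> A \<and> (u, x) \<notin> A}"

definition W11 :: "nat \<Rightarrow> (nat \<times> nat) set \<Rightarrow> nat set \<Rightarrow> nat set" where
  "W11 n A U = {x \<in> {1..n} - U. \<forall>u\<in>U. (x, u) \<in> A \<and> (u, x) \<in> A}"

definition useful_neighbour :: "nat \<Rightarrow> (nat \<times> nat) set \<Rightarrow> nat set \<Rightarrow> nat \<Rightarrow> bool" where
  "useful_neighbour n A U x \<longleftrightarrow> x \<in> {1..n} - U \<and>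
     x \<notin> W00 n A U \<and> x \<notin> W01 n A U \<and> x \<notin> W10 n A U \<and> x \<notin> W11 n A U"

definition useful_arc :: "nat \<Rightarrow> (nat \<times> nat) set \<Rightarrow> nat set \<Rightarrow> nat \<Rightarrow> nat \<Rightarrow> bool" where
  "useful_arc n A U x y \<longleftrightarrow> x \<noteq> y \<and>
     (((x, y) \<in> A \<and> x \<in> W00 n A U \<union> W01 n A U \<and> y \<in> W00 n A U \<union> W10 n A U) \<or>
      ((x, y) \<notin> A \<and> x \<in> W10 n A U \<union> W11 n A U \<and> y \<in> W01 n A U \<union> W11 n A U))"

end

theory Submission
  imports Defs
begin

theorem mainTheorem6:
  fixes n d :: nat and A :: "(nat \<times> nat) set" and v0 v1 v2 :: nat
  assumes "n \<ge> 4" and "1 \<le> d" and "d \<le> n - 1"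
    and "A \<in> Omega n d"
    and "{v0, v1, v2} \<subseteq> {1..n}"
    and "v0 \<noteq> v1" and "v1 \<noteq> v2" and "v0 \<noteq> v2"
    and "A \<inter> ({v0, v1, v2} \<times> {v0, v1, v2}) = {(v0, v1), (v1, v2), (v2, v0)} \<or>
         A \<inter> ({v0, v1, v2} \<times> {v0, v1, v2}) = {(v1, v0), (v2, v1), (v0, v2)}"
  shows "(\<exists>x. useful_neighbour n A {v0, v1, v2} x) \<or>
         (\<exists>x y. useful_arc n A {v0, v1, v2} x y)"
proof (rule ccontr)
  define U where "U = {v0, v1, v2}"
  define N where "N = {1..n}"
  define P where "P = W01 n A U \<union> W11 n A U"
  define Q where "Q = W10 n A U \<union> W11 n A U"
  assume "\<not> ?thesis"
  hence nn: "\<And>x. \<not> useful_neighbour n A U x" and na: "\<And>x y. \<not> useful_arc n A U x y"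
    unfolding U_def by auto
  have AN: "A \<subseteq> N \<times> N" and loop: "\<And>v. (v,v) \<notin> A"
    and deg: "\<And>v. v \<in> N \<Longrightarrow> card {u. (v, u) \<in> A} = d \<and> card {u. (u, v) \<in> A} = d"
    using assms(4) unfolding Omega_def N_def by auto
  have UN: "U \<subseteq> N" using assms(5) unfolding U_def N_def .
  have cU: "card U = 3" unfolding U_def using assms(6-8) by auto
  have fN: "finite N" unfolding N_def by simp
  have cover: "\<And>x. x \<in> N - U \<Longrightarrow> x \<in> W00 n A U \<or> x \<in> W01 n A U \<or> x \<in> W10 n A U \<or> x \<in> W11 n A U"
    using nn unfolding useful_neighbour_def N_def by blast
  have Ws: "W00 n A U \<subseteq> N - U" "W01 n A U \<subseteq> N - U" "W10 n A U \<subseteq> N - U" "W11 n A U \<subseteq> N - U"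
    unfolding W00_def W01_def W10_def W11_def N_def by auto
  have v0U: "v0 \<in> U" unfolding U_def by simp
  have outU: "card {u\<in>U. (v0,u)\<in>A} = 1" and inU: "card {u\<in>U. (u,v0)\<in>A} = 1"
  proof -
    have mem: "\<And>p. p \<in> U \<times> U \<Longrightarrow> p \<in> A \<longleftrightarrow> p \<in> A \<inter> (U \<times> U)" by blast
    have UU: "(v0,v0) \<in> U \<times> U" "(v0,v1) \<in> U \<times> U" "(v0,v2) \<in> U \<times> U"
      "(v1,v0) \<in> U \<times> U" "(v2,v0) \<in> U \<times> U" unfolding U_def by auto
    have "((v0,v1)\<in>A \<and> (v0,v2)\<notin>A \<and> (v1,v0)\<notin>A \<and> (v2,v0)\<in>A) \<or>
          ((v0,v1)\<notin>A \<and> (v0,v2)\<in>A \<and> (v1,v0)\<in>A \<and> (v2,v0)\<notin>A)"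
    proof (cases "A \<inter> (U \<times> U) = {(v0, v1), (v1, v2), (v2, v0)}")
      case True
      show ?thesis apply (rule disjI1) using mem[OF UU(2)] mem[OF UU(3)] mem[OF UU(4)] mem[OF UU(5)]
        unfolding True using assms(6-8) by auto
    next
      case False
      hence E: "A \<inter> (U \<times> U) = {(v1, v0), (v2, v1), (v0, v2)}" using assms(9) unfolding U_def by blast
      show ?thesis apply (rule disjI2) using mem[OF UU(2)] mem[OF UU(3)] mem[OF UU(4)] mem[OF UU(5)]
        unfolding E using assms(6-8) by auto
    qed
    moreover have "(v0,v0) \<notin> A" using loop by simp
    ultimately have "({u\<in>U. (v0,u)\<in>A} = {v1} \<and> {u\<in>U. (u,v0)\<in>A} = {v2}) \<or>
       ({u\<in>U. (v0,u)\<in>A} = {v2} \<and> {u\<in>U. (u,v0)\<in>A} = {v1})"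
      unfolding U_def by auto
    thus "card {u\<in>U. (v0,u)\<in>A} = 1" "card {u\<in>U. (u,v0)\<in>A} = 1" by auto
  qed
  have outeq: "{u. (v0,u)\<in>A} = {u\<in>U. (v0,u)\<in>A} \<union> P"
  proof
    show "{u. (v0,u)\<in>A} \<subseteq> {u\<in>U. (v0,u)\<in>A} \<union> P"
    proof
      fix u assume u: "u \<in> {u. (v0,u)\<in>A}"
      show "u \<in> {u\<in>U. (v0,u)\<in>A} \<union> P"
      proof (cases "u \<in> U")
        case False
        hence "u \<in> N - U" using u AN by auto
        thus ?thesis using cover[of u] u v0U unfolding P_def W00_def W10_def by blast
      qed (use u in auto)
    qed
    show "{u\<in>U. (v0,u)\<in>A} \<union> P \<subseteq> {u. (v0,u)\<in>A}"
      using v0U unfolding P_def W01_def W11_def by auto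
  qed
  have ineq: "{u. (u,v0)\<in>A} = {u\<in>U. (u,v0)\<in>A} \<union> Q"
  proof
    show "{u. (u,v0)\<in>A} \<subseteq> {u\<in>U. (u,v0)\<in>A} \<union> Q"
    proof
      fix u assume u: "u \<in> {u. (u,v0)\<in>A}"
      show "u \<in> {u\<in>U. (u,v0)\<in>A} \<union> Q"
      proof (cases "u \<in> U")
        case False
        hence "u \<in> N - U" using u AN by auto
        thus ?thesis using cover[of u] u v0U unfolding Q_def W00_def W01_def by blast
      qed (use u in auto)
    qed
    show "{u\<in>U. (u,v0)\<in>A} \<union> Q \<subseteq> {u. (u,v0)\<in>A}"
      using v0U unfolding Q_def W10_def W11_def by auto
  qed
  have fP: "finite P" and fQ: "finite Q" using Ws fN unfolding P_def Q_def
    by (auto intro: finite_subset)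
  have PU: "P \<inter> U = {}" and QU: "Q \<inter> U = {}" using Ws unfolding P_def Q_def by auto
  have fU: "finite U" unfolding U_def by simp
  have dP: "d = 1 + card P"
  proof -
    have "card ({u\<in>U. (v0,u)\<in>A} \<union> P) = card {u\<in>U. (v0,u)\<in>A} + card P"
      by (rule card_Un_disjoint) (use fU fP PU in auto)
    thus ?thesis using deg[of v0] outeq outU v0U UN by auto
  qed
  have dQ: "d = 1 + card Q"
  proof -
    have "card ({u\<in>U. (u,v0)\<in>A} \<union> Q) = card {u\<in>U. (u,v0)\<in>A} + card Q"
      by (rule card_Un_disjoint) (use fU fQ QU in auto)
    thus ?thesis using deg[of v0] ineq inU v0U UN by auto
  qed
  have Pe: "P = {}"
  proof (rule ccontr)
    assume "P \<noteq> {}"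
    then obtain y where y: "y \<in> P" by auto
    have yN: "y \<in> N" using y Ws unfolding P_def by auto
    have sub: "U \<union> (Q - {y}) \<subseteq> {u. (u,y) \<in> A}"
    proof
      fix u assume "u \<in> U \<union> (Q - {y})"
      thus "u \<in> {u. (u,y) \<in> A}"
      proof
        assume "u \<in> U" thus ?thesis using y unfolding P_def W01_def W11_def by auto
      next
        assume uq: "u \<in> Q - {y}"
        have "\<not> useful_arc n A U u y" by (rule na)
        thus ?thesis using uq y unfolding useful_arc_def P_def Q_def by auto
      qed
    qed
    have fin: "finite {u. (u,y) \<in> A}"
      by (rule finite_subset[of _ N]) (use AN fN in auto)
    have "card (U \<union> (Q - {y})) = card U + card (Q - {y})"
      by (rule card_Un_disjoint) (use fU fQ QU in auto)
    moreover have "card (Q - {y}) \<ge> card Q - 1" using diff_card_le_card_Diff[OF finite.insertI[OF finite.emptyI, of y], of Q] by simp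
    moreover have "card (U \<union> (Q - {y})) \<le> d" using card_mono[OF fin sub] deg[OF yN] by simp
    ultimately show False using cU dQ by linarith
  qed
  hence "d = 1" using dP by simp
  hence Qe: "Q = {}" using dQ fQ by simp
  obtain x where x: "x \<in> N - U"
  proof -
    have "card (N - U) \<ge> 1" using card_Diff_subset[OF fU UN] cU assms(1) unfolding N_def by simp
    thus ?thesis using that by (metis card.empty ex_in_conv not_one_le_zero)
  qed
  have xW: "x \<in> W00 n A U" using cover[OF x] Pe Qe unfolding P_def Q_def by auto
  have "card {u. (x,u) \<in> A} = 1" using deg[of x] x \<open>d = 1\<close> by auto
  then obtain z where z: "(x,z) \<in> A" by (metis card.empty empty_Collect_eq zero_neq_one)
  have zN: "z \<in> N" using z AN by auto
  have zU: "z \<notin> U" using xW z unfolding W00_def by auto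
  have zW: "z \<in> W00 n A U \<or> z \<in> W10 n A U" using cover[of z] zN zU Pe Qe unfolding P_def Q_def by auto
  have "x \<noteq> z" using z loop by auto
  hence "useful_arc n A U x z" using z xW zW unfolding useful_arc_def by auto
  thus False using na by blast
qed

end
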